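(* Let $N\ge2$, $d\ge1$ and consider the system $$\dot x_i(t)=\frac{\lambda_i(x)}{N}\sum_{j=1}^N M_{ij}(t)\,\phi_{ij}(x_i,x_j)\,(x_j(t)-x_i(t)),\qquad i=1,\dots,N,$$ with $x_i\in\mathbb{R}^d$, where all $M_{ij}:[0,+\infty)\to[0,1]$ are Lebesgue measurable and $\lambda_i:\mathbb{R}^{Nd}\to\mathbb{R}^+$, $\phi_{ij}:\mathbb{R}^d\times\mathbb{R}^d\to\mathbb{R}^+$ are Lipschitz continuous and strictly positive. Let $x(t)$ be a (Carathéodory) solution and let $\underline m,\overline m$ be the minimum and maximum of $\lambda_i(y)\phi_{ij}(y_i,y_j)$ over all $i,j\in\{1,\dots,N\}$ and all $y\in\mathbb{R}^{Nd}$ with $|y_k|\le\max_l|x_l(0)|$ for every $k$. Assume the Integral Scrambling Coefficients condition holds with parameters $(T,\mu)$, $T,\mu>0$: for all indices $i,j$ and all $t\ge0$ there exists an index $k$ (possibly depending on $i,j,t$) with $$\frac1T\int_t^{t+T}M_{ik}(s)\,ds\ge\mu\quad\text{and}\quad\frac1T\int_t^{t+T}M_{jk}(s)\,ds\ge\mu.$$ Then for all $n\in\mathbb{N}$, $$\max_{i,j}\left|x_i\!\left(n(N-1)2^{N(N-1)}T\right)-x_j\!\left(n(N-1)2^{N(N-1)}T\right)\right|\le C^n\max_{i,j}|x_i(0)-x_j(0)|,$$ with $$C=1-\left(\frac{\underline m\mu T}{N+\underline m\mu T}\right)^{N-1}\exp\!\left(-2\tfrac{N-1}{N}(N-1)^{(2^{N(N-1)})}T\overline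 m\right).$$
   Context: $|\cdot|$ is the Euclidean norm; $\mathbb{N}$ includes $0$. *)

theory Defs
  imports "HOL-Analysis.Analysis"
begin

text \<open>Agents are indexed by a finite type 'n (so N = CARD('n)); positions live in
  real^'d (d = CARD('d) \<ge> 1).  A configuration y \<in> R^{Nd} is an element of (real^'d)^'n,
  whose norm is the Euclidean norm on R^{Nd}.\<close>

definition rhs ::
  "('n::finite \<Rightarrow> (real^'d)^'n \<Rightarrow> real) \<Rightarrow> ('n \<Rightarrow> 'n \<Rightarrow> real \<Rightarrow> real)
    \<Rightarrow> ('n \<Rightarrow> 'n \<Rightarrow> real^'d \<Rightarrow> real^'d \<Rightarrow> real) \<Rightarrow> real \<Rightarrow> (real^'d)^'n \<Rightarrow> (real^'d)^'n"
  where "rhs lam M phi t y =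
    (\<chi> i. (lam i y / real CARD('n)) *\<^sub>R
           (\<Sum>j\<in>UNIV. (M i j t * phi i j (y$i) (y$j)) *\<^sub>R (y$j - y$i)))"

definition caratheodory_solution ::
  "(real \<Rightarrow> 'a::euclidean_space \<Rightarrow> 'a) \<Rightarrow> (real \<Rightarrow> 'a) \<Rightarrow> bool"
  where "caratheodory_solution F x \<longleftrightarrow>
    (\<forall>t\<ge>0. (\<lambda>s. F s (x s)) absolutely_integrable_on {0..t} \<and>
            x t = x 0 + integral {0..t} (\<lambda>s. F s (x s)))"

definition m_low ::
  "('n::finite \<Rightarrow> (real^'d)^'n \<Rightarrow> real) \<Rightarrow> ('n \<Rightarrow> 'n \<Rightarrow> real^'d \<Rightarrow> real^'d \<Rightarrow> real)
    \<Rightarrow> (real^'d)^'n \<Rightarrow> real"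
  where "m_low lam phi x0 = Inf {lam i y * phi i j (y$i) (y$j) | i j y.
            \<forall>k. norm (y$k) \<le> (MAX l. norm (x0$l))}"

definition m_up ::
  "('n::finite \<Rightarrow> (real^'d)^'n \<Rightarrow> real) \<Rightarrow> ('n \<Rightarrow> 'n \<Rightarrow> real^'d \<Rightarrow> real^'d \<Rightarrow> real)
    \<Rightarrow> (real^'d)^'n \<Rightarrow> real"
  where "m_up lam phi x0 = Sup {lam i y * phi i j (y$i) (y$j) | i j y.
            \<forall>k. norm (y$k) \<le> (MAX l. norm (x0$l))}"

definition conf_diam :: "(real^'d)^'n::finite \<Rightarrow> real"
  where "conf_diam y = (MAX i. MAX j. norm (y$i - y$j))"

definition ISC :: "('n \<Rightarrow> 'n \<Rightarrow> real \<Rightarrow> real) \<Rightarrow> real \<Rightarrow> real \<Rightarrow> bool"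
  where "ISC M T \<mu> \<longleftrightarrow> (\<forall>i j. \<forall>t\<ge>0. \<exists>k.
            (1/T) * integral {t..t+T} (M i k) \<ge> \<mu> \<and> (1/T) * integral {t..t+T} (M j k) \<ge> \<mu>)"

end

theory Submission
  imports Defs
begin
lemma diff_rep:
  fixes f g :: "real \<Rightarrow> real"
  assumes int: "f integrable_on {a..b}" and rep: "\<And>t. t\<in>{a..b} \<Longrightarrow> g t = g a + integral {a..t} f"
    and o: "a \<le> t'" "t' \<le> t" "t \<le> b"
  shows "g t - g t' = integral {t'..t} f"
proof -
  have "f integrable_on {a..t}" by (rule integrable_on_subinterval[OF int]) (use o in auto)
  then have "integral {a..t'} f + integral {t'..t} f = integral {a..t} f"
    using o by (intro Henstock_Kurzweil_Integration.integral_combine) auto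
  moreover have "g t = g a + integral {a..t} f" by (rule rep) (use o in auto)
  moreover have "g t' = g a + integral {a..t'} f" by (rule rep) (use o in auto)
  ultimately show ?thesis by simp
qed

lemma last_nonneg:
  fixes z :: "real \<Rightarrow> real"
  assumes "a \<le> b" "continuous_on {a..b} z" "z a \<ge> 0" "z b < 0"
  obtains t' where "a \<le> t'" "t' < b" "z t' = 0" "\<And>s. s \<in> {t'..b} \<Longrightarrow> z s \<le> 0"
proof -
  let ?S = "{s \<in> {a..b}. (\<lambda>_. 0) s \<le> z s}"
  have cl: "closed ?S"
    by (rule continuous_on_closed_Collect_le) (use assms in auto)
  have "bounded ?S" by (rule bounded_subset[of "{a..b}"]) auto
  then have cS: "compact ?S" using cl by (simp add: compact_eq_bounded_closed)
  have nS: "?S \<noteq> {}" using assms by auto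
  obtain t' where t'S: "t' \<in> ?S" and t'max: "\<And>s. s \<in> ?S \<Longrightarrow> s \<le> t'"
    using compact_attains_sup[OF cS nS] by metis
  have t'ab: "a \<le> t'" "t' \<le> b" "z t' \<ge> 0" using t'S by auto
  have "t' \<noteq> b" using t'ab assms(4) by auto
  then have tb: "t' < b" using t'ab by linarith
  have "continuous_on {t'..b} z" by (rule continuous_on_subset[OF assms(2)]) (use t'ab in auto)
  then obtain s0 where s0: "s0 \<ge> t'" "s0 \<le> b" "z s0 = 0"
    using IVT2'[of z b 0 t'] t'ab assms(4) tb by auto
  then have "s0 \<in> ?S" using t'ab by auto
  then have "s0 \<le> t'" by (rule t'max)
  then have s0t: "s0 = t'" using s0(1) by linarith
  have zle: "z s \<le> 0" if "s \<in> {t'..b}" for s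
  proof (cases "s = t'")
    case True then show ?thesis using s0 s0t by simp
  next
    case False
    then have "t' < s" using that by auto
    then have "s \<notin> ?S" using t'max[of s] by linarith
    then show ?thesis using that t'ab by auto
  qed
  have "z t' = 0" using s0(3) s0t by simp
  show ?thesis by (rule that[OF t'ab(1) tb \<open>z t' = 0\<close>]) (rule zle)
qed

lemma sign_lemma:
  fixes z :: "real \<Rightarrow> real"
  assumes "a \<le> b" "continuous_on {a..b} z" "z a \<ge> 0" "r \<ge> 0"
    and step: "\<And>t' t. a \<le> t' \<Longrightarrow> t' \<le> t \<Longrightarrow> t \<le> b \<Longrightarrow> z t - z t' \<ge> - r * integral {t'..t} z"
  shows "z b \<ge> 0"
proof (rule ccontr)
  assume "\<not> z b \<ge> 0"
  then have zb: "z b < 0" by simp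
  obtain t' where t': "a \<le> t'" "t' < b" "z t' = 0" "\<And>s. s \<in> {t'..b} \<Longrightarrow> z s \<le> 0"
    using last_nonneg[OF assms(1,2,3) zb] by blast
  have "continuous_on {t'..b} z" by (rule continuous_on_subset[OF assms(2)]) (use t' in auto)
  then have "z integrable_on {t'..b}" by (rule integrable_continuous_interval)
  then have "integral {t'..b} z \<le> integral {t'..b} (\<lambda>_. 0::real)"
    using t' by (intro integral_le) auto
  then have "integral {t'..b} z \<le> 0" by simp
  then have "- r * integral {t'..b} z \<ge> 0" using assms(4)
    by (metis mult_minus_left neg_0_le_iff_le mult_nonneg_nonpos)
  moreover have "z b - z t' \<ge> - r * integral {t'..b} z" using step[of t' b] t'(1,2) by linarith
  ultimately show False using t'(3) zb by linarith
qed

lemma negpart_zero: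
  fixes n :: "real \<Rightarrow> real"
  assumes ab: "a \<le> b" and cont: "continuous_on {a..b} n" and nn: "\<And>s. s\<in>{a..b} \<Longrightarrow> n s \<ge> 0"
    and K: "K \<ge> 0" and bd: "\<And>t. t \<in> {a..b} \<Longrightarrow> n t \<le> K * integral {a..t} n"
  shows "n b \<le> 0"
proof -
  define I where "I = (\<lambda>t. integral {a..t} n)"
  define P where "P = (\<lambda>t. exp (- K * t) * I t)"
  define P' where "P' t = exp (- K * t) * (n t - K * I t)" for t
  have dI: "(I has_real_derivative n t) (at t within {a..b})" if "t \<in> {a..b}" for t
  proof -
    have "((\<lambda>u. integral {a..u} n) has_vector_derivative n t) (at t within {a..b})"
      by (rule integral_has_vector_derivative[OF cont that])
    then show ?thesis by (simp add: I_def has_real_derivative_iff_has_vector_derivative)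
  qed
  have dP: "(P has_vector_derivative P' t) (at t within {a..b})" if "t \<in> {a..b}" for t
  proof -
    have e: "((\<lambda>t. exp (- K * t)) has_real_derivative (exp (- K * t) * (- K))) (at t within {a..b})"
      by (auto intro!: derivative_eq_intros)
    have "(P has_real_derivative (exp (- K * t) * (- K)) * I t + exp (- K * t) * n t) (at t within {a..b})"
      unfolding P_def using DERIV_mult[OF e dI[OF that]] by (simp add: algebra_simps)
    moreover have "(exp (- K * t) * (- K)) * I t + exp (- K * t) * n t = P' t"
      unfolding P'_def by (simp add: algebra_simps)
    ultimately show ?thesis by (simp add: has_real_derivative_iff_has_vector_derivative)
  qed
  have "(P' has_integral P b - P a) {a..b}"
    using fundamental_theorem_of_calculus[OF ab dP] by simp
  moreover have "((\<lambda>_. 0::real) has_integral 0) {a..b}" by simp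
  moreover have "P' t \<le> 0" if "t \<in> {a..b}" for t
  proof -
    have "n t - K * I t \<le> 0" using bd[OF that] unfolding I_def by linarith
    then show ?thesis unfolding P'_def by (intro mult_nonneg_nonpos) auto
  qed
  ultimately have "P b - P a \<le> 0" by (rule has_integral_le)
  moreover have "P a = 0" unfolding P_def I_def by simp
  ultimately have "P b \<le> 0" by simp
  then have "I b \<le> 0" unfolding P_def by (simp add: mult_le_0_iff)
  then have "K * I b \<le> 0" using K by (intro mult_nonneg_nonpos)
  moreover have "n b \<le> K * I b" using bd[of b] ab unfolding I_def by auto
  ultimately show ?thesis by linarith
qed

lemma comp_lemma:
  fixes g f u :: "real \<Rightarrow> real"
  assumes ab: "a \<le> b" and r: "r \<ge> 0" and gc: "continuous_on {a..b} g"
   and fi: "f integrable_on {a..b}"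
   and rep: "\<And>t' t. a \<le> t' \<Longrightarrow> t' \<le> t \<Longrightarrow> t \<le> b \<Longrightarrow> g t - g t' = integral {t'..t} f"
   and ui: "u integrable_on {a..b}" and u0: "\<And>s. s\<in>{a..b} \<Longrightarrow> u s \<ge> 0"
   and fl: "\<And>s. s\<in>{a..b} \<Longrightarrow> f s \<ge> u s - r * g s"
  shows "g b \<ge> exp (- r * (b - a)) * (g a + integral {a..b} u)"
proof -
  define U where "U = (\<lambda>t. integral {a..t} u)"
  define E where "E = (\<lambda>t. exp (- r * (t - a)))"
  define w where "w = (\<lambda>t. E t * (g a + U t))"
  define z where "z = (\<lambda>t. g t - w t)"
  have Uc: "continuous_on {a..b} U" unfolding U_def by (rule indefinite_integral_continuous_1[OF ui])
  have Ec: "continuous_on {a..b} E" unfolding E_def by (intro continuous_intros)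
  have wc: "continuous_on {a..b} w" unfolding w_def by (intro continuous_intros Ec Uc)
  have zc: "continuous_on {a..b} z" unfolding z_def by (intro continuous_intros gc wc)
  have Ua: "U a = 0" unfolding U_def by simp
  have Udiff: "U t - U t' = integral {t'..t} u" if "a \<le> t'" "t' \<le> t" "t \<le> b" for t' t
    by (rule diff_rep[OF ui _ that]) (simp add: Ua, simp add: U_def)
  have Umono: "U t' \<le> U t" if "a \<le> t'" "t' \<le> t" "t \<le> b" for t' t
  proof -
    have "u integrable_on {t'..t}" by (rule integrable_on_subinterval[OF ui]) (use that in auto)
    then have "integral {t'..t} u \<ge> 0" by (rule integral_nonneg) (use u0 that in auto)
    then show ?thesis using Udiff[OF that] by linarith
  qed
  have Eint: "integral {t'..t} (\<lambda>s. r * E s) = E t' - E t" if "t' \<le> t" for t' t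
  proof -
    have "((\<lambda>s. - E s) has_vector_derivative r * E s) (at s within {t'..t})" for s
    proof -
      have "((\<lambda>s. - E s) has_real_derivative r * E s) (at s within {t'..t})"
        unfolding E_def by (auto intro!: derivative_eq_intros)
      then show ?thesis by (simp add: has_real_derivative_iff_has_vector_derivative)
    qed
    then have "((\<lambda>s. r * E s) has_integral (- E t) - (- E t')) {t'..t}"
      by (intro fundamental_theorem_of_calculus[OF that])
    then have "((\<lambda>s. r * E s) has_integral E t' - E t) {t'..t}" by simp
    then show ?thesis by (rule integral_unique)
  qed
  have step: "z t - z t' \<ge> - r * integral {t'..t} z" if o: "a \<le> t'" "t' \<le> t" "t \<le> b" for t' t
  proof -
    have sub: "{t'..t} \<subseteq> {a..b}" using o by auto
    have fi': "f integrable_on {t'..t}" by (rule integrable_on_subinterval[OF fi sub])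
    have ui': "u integrable_on {t'..t}" by (rule integrable_on_subinterval[OF ui sub])
    have gi': "g integrable_on {t'..t}"
      by (rule integrable_continuous_interval) (rule continuous_on_subset[OF gc sub])
    have wi': "w integrable_on {t'..t}"
      by (rule integrable_continuous_interval) (rule continuous_on_subset[OF wc sub])
    have Ei': "E integrable_on {t'..t}"
      by (rule integrable_continuous_interval) (rule continuous_on_subset[OF Ec sub])
    have rgi: "(\<lambda>s. r * g s) integrable_on {t'..t}" using gi' by (rule integrable_on_mult_right)
    have "integral {t'..t} (\<lambda>s. u s - r * g s) \<le> integral {t'..t} f"
      by (rule integral_le[OF integrable_diff[OF ui' rgi] fi']) (use fl sub in auto)
    moreover have "integral {t'..t} (\<lambda>s. u s - r * g s) = integral {t'..t} u - r * integral {t'..t} g"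
      using integral_diff[OF ui' rgi] by (simp add: integral_mult_right)
    moreover have "g t - g t' = integral {t'..t} f" by (rule rep[OF o])
    ultimately have one: "g t - g t' \<ge> (U t - U t') - r * integral {t'..t} g"
      using Udiff[OF o] by linarith
    have Eai: "(\<lambda>s. E s * (g a + U t)) integrable_on {t'..t}" using Ei' by (rule integrable_on_mult_left)
    have "integral {t'..t} w \<le> integral {t'..t} (\<lambda>s. E s * (g a + U t))"
    proof (rule integral_le[OF wi' Eai])
      fix s assume s: "s \<in> {t'..t}"
      have "U s \<le> U t" using s o by (intro Umono) auto
      moreover have "E s \<ge> 0" unfolding E_def by simp
      ultimately show "w s \<le> E s * (g a + U t)" unfolding w_def by (intro mult_left_mono) auto
    qed
    also have "\<dots> = integral {t'..t} E * (g a + U t)" by (rule integral_mult_left)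
    finally have "r * integral {t'..t} w \<le> r * (integral {t'..t} E * (g a + U t))"
      using r by (rule mult_left_mono)
    also have "\<dots> = integral {t'..t} (\<lambda>s. r * E s) * (g a + U t)"
      by (simp add: integral_mult_right)
    also have "\<dots> = (E t' - E t) * (g a + U t)" using Eint o by simp
    finally have two: "r * integral {t'..t} w \<le> (E t' - E t) * (g a + U t)" .
    have "E t' \<le> 1" unfolding E_def using r o by (simp add: mult_nonneg_nonneg)
    moreover have "U t' \<le> U t" using Umono o by simp
    ultimately have three: "(U t - U t') * (1 - E t') \<ge> 0" by simp
    have iz: "integral {t'..t} z = integral {t'..t} g - integral {t'..t} w"
      unfolding z_def by (rule integral_diff[OF gi' wi'])
    have ident: "(U t - U t') - E t * (g a + U t) + E t' * (g a + U t') - (E t' - E t) * (g a + U t)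
       = (U t - U t') * (1 - E t')" by (simp add: algebra_simps)
    have zd: "z t - z t' = (g t - g t') - E t * (g a + U t) + E t' * (g a + U t')"
      unfolding z_def w_def by simp
    have rz: "- r * integral {t'..t} z = - (r * integral {t'..t} g) + r * integral {t'..t} w"
      unfolding iz by (simp add: algebra_simps)
    show ?thesis unfolding rz zd using one two three ident by linarith
  qed
  have "z a \<ge> 0" unfolding z_def w_def E_def using Ua by simp
  then have "z b \<ge> 0" by (rule sign_lemma[OF ab zc _ r step])
  then show ?thesis unfolding z_def w_def E_def U_def by simp
qed

lemma inv_system:
  fixes g f :: "'n::finite \<Rightarrow> real \<Rightarrow> real" and c :: "'n \<Rightarrow> 'n \<Rightarrow> real \<Rightarrow> real"
  assumes ab: "a \<le> b"
   and gc: "\<And>l. continuous_on {a..b} (g l)"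
   and fi: "\<And>l. f l integrable_on {a..b}"
   and rep: "\<And>l t' t. a \<le> t' \<Longrightarrow> t' \<le> t \<Longrightarrow> t \<le> b \<Longrightarrow> g l t - g l t' = integral {t'..t} (f l)"
   and fe: "\<And>l s. s \<in> {a..b} \<Longrightarrow> f l s = (\<Sum>j\<in>UNIV. c l j s * (g j s - g l s))"
   and cb: "\<And>l j s. s \<in> {a..b} \<Longrightarrow> 0 \<le> c l j s \<and> c l j s \<le> C"
   and g0: "\<And>l. g l a \<ge> 0"
  shows "g l b \<ge> 0"
proof -
  have C0: "C \<ge> 0" using cb[of a] ab by force
  define ng where "ng = (\<lambda>l s. max 0 (- g l s))"
  define n where "n = (\<lambda>s. \<Sum>l\<in>UNIV. ng l s)"
  have ngc: "continuous_on {a..b} (ng l)" for l unfolding ng_def by (intro continuous_intros gc)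
  have nc: "continuous_on {a..b} n" unfolding n_def by (intro continuous_on_sum ngc)
  have ng0: "ng l s \<ge> 0" for l s unfolding ng_def by simp
  have nn: "n s \<ge> 0" for s unfolding n_def by (intro sum_nonneg ng0)
  have key: "ng l t \<le> C * integral {a..t} n" if t: "t \<in> {a..b}" for l t
  proof (cases "g l t \<ge> 0")
    case True
    have "n integrable_on {a..t}" by (rule integrable_continuous_interval) (rule continuous_on_subset[OF nc], use t in auto)
    then have "integral {a..t} n \<ge> 0" by (rule integral_nonneg) (rule nn)
    then show ?thesis using True C0 unfolding ng_def by simp
  next
    case False
    then have glt: "g l t < 0" by simp
    have ct: "continuous_on {a..t} (g l)" by (rule continuous_on_subset[OF gc]) (use t in auto)
    obtain t' where t': "a \<le> t'" "t' < t" "g l t' = 0" and tle: "\<And>s. s \<in> {t'..t} \<Longrightarrow> g l s \<le> 0"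
      using last_nonneg[OF _ ct g0 glt] t by auto
    have sub: "{t'..t} \<subseteq> {a..b}" using t t' by auto
    have fi': "f l integrable_on {t'..t}" by (rule integrable_on_subinterval[OF fi sub])
    have ni': "n integrable_on {t'..t}" by (rule integrable_continuous_interval) (rule continuous_on_subset[OF nc sub])
    have ni2: "n integrable_on {a..t'}" by (rule integrable_continuous_interval) (rule continuous_on_subset[OF nc], use t t' in auto)
    have ni3: "n integrable_on {a..t}" by (rule integrable_continuous_interval) (rule continuous_on_subset[OF nc], use t t' in auto)
    have "- g l t = - (g l t - g l t')" using t' by simp
    also have "\<dots> = integral {t'..t} (\<lambda>s. - f l s)"
      using rep[of t' t l] t t' by (simp add: integral_neg)
    also have "\<dots> \<le> integral {t'..t} (\<lambda>s. C * n s)"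
    proof (rule integral_le)
      show "(\<lambda>s. - f l s) integrable_on {t'..t}" using fi' by (rule integrable_neg)
      show "(\<lambda>s. C * n s) integrable_on {t'..t}" using ni' by (rule integrable_on_mult_right)
      fix s assume s: "s \<in> {t'..t}"
      then have sab: "s \<in> {a..b}" using sub by auto
      have "- f l s = (\<Sum>j\<in>UNIV. c l j s * (g l s - g j s))"
        unfolding fe[OF sab] by (simp add: sum_negf[symmetric] algebra_simps)
      also have "\<dots> \<le> (\<Sum>j\<in>UNIV. C * ng j s)"
      proof (rule sum_mono)
        fix j
        have c: "0 \<le> c l j s" "c l j s \<le> C" using cb[OF sab] by auto
        have "g l s - g j s \<le> ng j s" using tle[OF s] unfolding ng_def by simp
        then have "c l j s * (g l s - g j s) \<le> c l j s * ng j s" using c by (intro mult_left_mono) auto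
        also have "\<dots> \<le> C * ng j s" using c ng0 by (intro mult_right_mono) auto
        finally show "c l j s * (g l s - g j s) \<le> C * ng j s" .
      qed
      also have "\<dots> = C * n s" unfolding n_def by (simp add: sum_distrib_left)
      finally show "- f l s \<le> C * n s" .
    qed
    also have "\<dots> = C * integral {t'..t} n" by (simp add: integral_mult_right)
    also have "\<dots> \<le> C * integral {a..t} n"
    proof -
      have "integral {a..t'} n + integral {t'..t} n = integral {a..t} n"
        using t t' by (intro Henstock_Kurzweil_Integration.integral_combine ni3) auto
      moreover have "integral {a..t'} n \<ge> 0" by (rule integral_nonneg[OF ni2]) (rule nn)
      ultimately show ?thesis using C0 by (intro mult_left_mono) auto
    qed
    finally show ?thesis using glt unfolding ng_def by simp
  qed
  have bd: "n t \<le> (real CARD('n) * C) * integral {a..t} n" if "t \<in> {a..b}" for t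
  proof -
    have "(\<Sum>l\<in>UNIV. ng l t) \<le> (\<Sum>l\<in>(UNIV::'n set). C * integral {a..t} n)" by (rule sum_mono) (rule key[OF that])
    moreover have "n t = (\<Sum>l\<in>UNIV. ng l t)" by (simp add: n_def)
    ultimately have "n t \<le> (\<Sum>l\<in>(UNIV::'n set). C * integral {a..t} n)" by simp
    then show ?thesis by simp
  qed
  have "n b \<le> 0" by (rule negpart_zero[OF ab nc _ _ bd]) (auto intro: nn C0 mult_nonneg_nonneg)
  moreover have "ng l b \<le> (\<Sum>l\<in>UNIV. ng l b)" by (rule member_le_sum) (auto intro: ng0)
  moreover have "n b = (\<Sum>l\<in>UNIV. ng l b)" by (simp add: n_def)
  ultimately show ?thesis unfolding ng_def by simp
qed

lemma lower_f:
  fixes g :: "'n::finite \<Rightarrow> real \<Rightarrow> real" and c :: "'n \<Rightarrow> 'n \<Rightarrow> real \<Rightarrow> real"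
  assumes cb: "\<And>j. 0 \<le> c l j s \<and> c l j s \<le> \<rho>" and gnn: "\<And>j. g j s \<ge> 0"
  shows "(\<Sum>j\<in>UNIV. c l j s * (g j s - g l s)) \<ge>
           (\<Sum>j\<in>UNIV-{l}. c l j s * g j s) - real (CARD('n) - 1) * \<rho> * g l s"
proof -
  have "(\<Sum>j\<in>UNIV. c l j s * (g j s - g l s)) = (\<Sum>j\<in>UNIV-{l}. c l j s * (g j s - g l s))"
    by (subst sum.remove[of UNIV l]) auto
  also have "\<dots> = (\<Sum>j\<in>UNIV-{l}. c l j s * g j s) - (\<Sum>j\<in>UNIV-{l}. c l j s) * g l s"
    by (simp add: right_diff_distrib sum_subtractf sum_distrib_right)
  finally have e: "(\<Sum>j\<in>UNIV. c l j s * (g j s - g l s)) = (\<Sum>j\<in>UNIV-{l}. c l j s * g j s) - (\<Sum>j\<in>UNIV-{l}. c l j s) * g l s" .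
  have "(\<Sum>j\<in>UNIV-{l}. c l j s) \<le> real (card (UNIV - {l} :: 'n set)) * \<rho>"
    by (rule sum_bounded_above) (use cb in auto)
  also have "card (UNIV - {l} :: 'n set) = CARD('n) - 1" by (simp add: card_Diff_singleton)
  finally have "(\<Sum>j\<in>UNIV-{l}. c l j s) * g l s \<le> real (CARD('n) - 1) * \<rho> * g l s"
    using gnn[of l] by (intro mult_right_mono) auto
  then show ?thesis unfolding e by linarith
qed

lemma decay_system:
  fixes g f :: "'n::finite \<Rightarrow> real \<Rightarrow> real" and c :: "'n \<Rightarrow> 'n \<Rightarrow> real \<Rightarrow> real"
  assumes ab: "a \<le> b"
   and gc: "\<And>l. continuous_on {a..b} (g l)"
   and fi: "\<And>l. f l integrable_on {a..b}"
   and rep: "\<And>l t' t. a \<le> t' \<Longrightarrow> t' \<le> t \<Longrightarrow> t \<le> b \<Longrightarrow> g l t - g l t' = integral {t'..t} (f l)"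
   and fe: "\<And>l s. s \<in> {a..b} \<Longrightarrow> f l s = (\<Sum>j\<in>UNIV. c l j s * (g j s - g l s))"
   and cb: "\<And>l j s. s \<in> {a..b} \<Longrightarrow> 0 \<le> c l j s \<and> c l j s \<le> \<rho>"
   and gnn: "\<And>l s. s \<in> {a..b} \<Longrightarrow> g l s \<ge> 0"
   and t: "t \<in> {a..b}"
  shows "g k t \<ge> exp (- (real (CARD('n) - 1) * \<rho>) * (t - a)) * g k a"
proof -
  have rho: "\<rho> \<ge> 0" using cb[of a] ab by force
  define r where "r = real (CARD('n) - 1) * \<rho>"
  have r0: "r \<ge> 0" unfolding r_def using rho by simp
  have sub: "{a..t} \<subseteq> {a..b}" using t by auto
  have "g k t \<ge> exp (- r * (t - a)) * (g k a + integral {a..t} (\<lambda>_. 0::real))"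
  proof (rule comp_lemma[where f = "f k"])
    show "a \<le> t" using t by auto
    show "0 \<le> r" by (rule r0)
    show "continuous_on {a..t} (g k)" by (rule continuous_on_subset[OF gc sub])
    show "f k integrable_on {a..t}" by (rule integrable_on_subinterval[OF fi sub])
    show "g k t2 - g k t1 = integral {t1..t2} (f k)" if "a \<le> t1" "t1 \<le> t2" "t2 \<le> t" for t1 t2
      by (rule rep) (use that t in auto)
    show "(\<lambda>_. 0::real) integrable_on {a..t}" by (rule integrable_0)
    show "0 \<le> (0::real)" if "s \<in> {a..t}" for s by simp
    show "0 - r * g k s \<le> f k s" if s: "s \<in> {a..t}" for s
    proof -
      have sab: "s \<in> {a..b}" using s sub by auto
      have "f k s \<ge> (\<Sum>j\<in>UNIV-{k}. c k j s * g j s) - r * g k s"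
        unfolding fe[OF sab] r_def by (rule lower_f) (use cb[OF sab] gnn[OF sab] in auto)
      moreover have "(\<Sum>j\<in>UNIV-{k}. c k j s * g j s) \<ge> 0"
        by (rule sum_nonneg) (use cb[OF sab] gnn[OF sab] in auto)
      ultimately show ?thesis by linarith
    qed
  qed
  then show ?thesis unfolding r_def by simp
qed

lemma push_system:
  fixes g f :: "'n::finite \<Rightarrow> real \<Rightarrow> real" and c :: "'n \<Rightarrow> 'n \<Rightarrow> real \<Rightarrow> real"
  assumes ab: "a \<le> b"
   and gc: "\<And>l. continuous_on {a..b} (g l)"
   and fi: "\<And>l. f l integrable_on {a..b}"
   and rep: "\<And>l t' t. a \<le> t' \<Longrightarrow> t' \<le> t \<Longrightarrow> t \<le> b \<Longrightarrow> g l t - g l t' = integral {t'..t} (f l)"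
   and fe: "\<And>l s. s \<in> {a..b} \<Longrightarrow> f l s = (\<Sum>j\<in>UNIV. c l j s * (g j s - g l s))"
   and cb: "\<And>l j s. s \<in> {a..b} \<Longrightarrow> 0 \<le> c l j s \<and> c l j s \<le> \<rho>"
   and gnn: "\<And>l s. s \<in> {a..b} \<Longrightarrow> g l s \<ge> 0"
   and ik: "i \<noteq> k"
   and Mi: "Mf integrable_on {a..b}" and M0: "\<And>s. s \<in> {a..b} \<Longrightarrow> Mf s \<ge> 0"
   and beta: "\<beta> \<ge> 0" and cik: "\<And>s. s \<in> {a..b} \<Longrightarrow> c i k s \<ge> \<beta> * Mf s"
  shows "g i b \<ge> exp (- (real (CARD('n) - 1) * \<rho>) * (b - a)) *
           (\<beta> * (exp (- (real (CARD('n) - 1) * \<rho>) * (b - a)) * g k a) * integral {a..b} Mf)"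
proof -
  have rho: "\<rho> \<ge> 0" using cb[of a] ab by force
  define r where "r = real (CARD('n) - 1) * \<rho>"
  have r0: "r \<ge> 0" unfolding r_def using rho by simp
  define \<gamma> where "\<gamma> = exp (- r * (b - a)) * g k a"
  have gka: "g k a \<ge> 0" using gnn[of a] ab by auto
  have gam0: "\<gamma> \<ge> 0" unfolding \<gamma>_def using gka by simp
  have gks: "g k s \<ge> \<gamma>" if s: "s \<in> {a..b}" for s
  proof -
    have "g k s \<ge> exp (- r * (s - a)) * g k a"
      unfolding r_def by (rule decay_system[OF ab gc fi rep fe cb gnn s])
    moreover have "exp (- r * (b - a)) \<le> exp (- r * (s - a))"
      using s r0 by (simp add: mult_left_mono)
    ultimately show ?thesis unfolding \<gamma>_def using gka
      by (meson mult_right_mono order_trans)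
  qed
  define u where "u = (\<lambda>s. (\<beta> * \<gamma>) * Mf s)"
  have "g i b \<ge> exp (- r * (b - a)) * (g i a + integral {a..b} u)"
  proof (rule comp_lemma[where f = "f i"])
    show "a \<le> b" by (rule ab)
    show "0 \<le> r" by (rule r0)
    show "continuous_on {a..b} (g i)" by (rule gc)
    show "f i integrable_on {a..b}" by (rule fi)
    show "g i t2 - g i t1 = integral {t1..t2} (f i)" if "a \<le> t1" "t1 \<le> t2" "t2 \<le> b" for t1 t2
      by (rule rep) (use that in auto)
    show "u integrable_on {a..b}" unfolding u_def using Mi by (rule integrable_on_mult_right)
    show "0 \<le> u s" if "s \<in> {a..b}" for s
      unfolding u_def using beta gam0 M0[OF that] by simp
    show "u s - r * g i s \<le> f i s" if s: "s \<in> {a..b}" for s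
    proof -
      have "f i s \<ge> (\<Sum>j\<in>UNIV-{i}. c i j s * g j s) - r * g i s"
        unfolding fe[OF s] r_def by (rule lower_f) (use cb[OF s] gnn[OF s] in auto)
      moreover have "c i k s * g k s \<le> (\<Sum>j\<in>UNIV-{i}. c i j s * g j s)"
        by (rule member_le_sum[where f = "\<lambda>j. c i j s * g j s"]) (use ik cb[OF s] gnn[OF s] in auto)
      moreover have "(\<beta> * Mf s) * \<gamma> \<le> c i k s * g k s"
        by (rule mult_mono) (use cik[OF s] gks[OF s] cb[OF s] gam0 in auto)
      ultimately show ?thesis unfolding u_def by (simp add: algebra_simps)
    qed
  qed
  moreover have "integral {a..b} u = \<beta> * \<gamma> * integral {a..b} Mf"
    unfolding u_def by (simp add: integral_mult_right)
  moreover have "g i a \<ge> 0" using gnn[of a] ab by auto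
  ultimately have "g i b \<ge> exp (- r * (b - a)) * (\<beta> * \<gamma> * integral {a..b} Mf)"
    by (smt (verit) exp_gt_zero mult_left_mono)
  then show ?thesis unfolding r_def \<gamma>_def by (simp add: mult.assoc)
qed

locale cons_sys =
  fixes lam :: "'n::finite \<Rightarrow> (real^'d)^'n \<Rightarrow> real"
    and phi :: "'n \<Rightarrow> 'n \<Rightarrow> real^'d \<Rightarrow> real^'d \<Rightarrow> real"
    and M :: "'n \<Rightarrow> 'n \<Rightarrow> real \<Rightarrow> real"
    and x :: "real \<Rightarrow> (real^'d)^'n"
    and T \<mu> :: real
  assumes N2: "CARD('n) \<ge> 2"
    and M_meas: "\<And>i j. M i j \<in> borel_measurable (restrict_space lebesgue {0..})"
    and M_range: "\<And>i j t. t \<ge> 0 \<Longrightarrow> 0 \<le> M i j t \<and> M i j t \<le> 1"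
    and lam_lip: "\<And>i. \<exists>L. L-lipschitz_on UNIV (lam i)"
    and phi_lip: "\<And>i j. \<exists>L. L-lipschitz_on UNIV (\<lambda>p. phi i j (fst p) (snd p))"
    and lam_pos: "\<And>i y. lam i y > 0"
    and phi_pos: "\<And>i j a b. phi i j a b > 0"
    and sol: "caratheodory_solution (rhs lam M phi) x"
    and T_pos: "T > 0" and mu_pos: "\<mu> > 0"
    and isc: "ISC M T \<mu>"
begin

definition X where "X = (\<lambda>s. rhs lam M phi s (x s))"
definition c where "c = (\<lambda>l j s. lam l (x s) * phi l j (x s $ l) (x s $ j) * (M l j s / real CARD('n)))"
definition H where "H = (\<lambda>l j s. lam l (x s) * phi l j (x s $ l) (x s $ j))"
definition p where "p = (\<lambda>v l s. inner (x s $ l) v)"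
definition fv where "fv = (\<lambda>v l s. inner (X s $ l) v)"

lemma Xint: "t \<ge> 0 \<Longrightarrow> X integrable_on {0..t}"
proof -
  assume "t \<ge> 0"
  then have "X absolutely_integrable_on {0..t}"
    using sol unfolding caratheodory_solution_def X_def by blast
  then show ?thesis by (rule set_lebesgue_integral_eq_integral(1))
qed

lemma xrep: "t \<ge> 0 \<Longrightarrow> x t = x 0 + integral {0..t} X"
  using sol unfolding caratheodory_solution_def X_def by blast

lemma xcont: "b \<ge> 0 \<Longrightarrow> continuous_on {0..b} x"
proof -
  assume b: "b \<ge> 0"
  have "continuous_on {0..b} (\<lambda>t. x 0 + integral {0..t} X)"
    by (intro continuous_intros indefinite_integral_continuous_1 Xint b)
  then show ?thesis by (rule continuous_on_eq) (metis atLeastAtMost_iff xrep)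
qed

lemma bl: "bounded_linear (\<lambda>y::(real^'d)^'n. inner (y $ l) v)"
  by (rule bounded_linear_compose[OF bounded_linear_inner_left bounded_linear_vec_nth])

lemma fvint: "t \<ge> 0 \<Longrightarrow> fv v l integrable_on {0..t}"
  using integrable_linear[OF Xint bl] unfolding fv_def by (simp add: o_def)

lemma prep: "t \<ge> 0 \<Longrightarrow> p v l t = p v l 0 + integral {0..t} (fv v l)"
proof -
  assume t: "t \<ge> 0"
  have "integral {0..t} (fv v l) = inner (integral {0..t} X $ l) v"
    using integral_linear[OF Xint[OF t] bl[of l v]] unfolding fv_def by (simp add: o_def)
  then show ?thesis unfolding p_def using xrep[OF t] by (simp add: inner_add_left)
qed

lemma pdiff: "0 \<le> t' \<Longrightarrow> t' \<le> t \<Longrightarrow> p v l t - p v l t' = integral {t'..t} (fv v l)"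
  by (rule diff_rep[where a = 0 and b = t, OF fvint]) (auto intro: prep)

lemma pcont: "0 \<le> a \<Longrightarrow> continuous_on {a..b} (p v l)"
proof (cases "a \<le> b")
  case True
  assume a: "0 \<le> a"
  have "continuous_on {0..b} x" using a True by (intro xcont) auto
  then have "continuous_on {a..b} x" by (rule continuous_on_subset) (use a in auto)
  then show ?thesis unfolding p_def by (intro continuous_intros continuous_on_component)
next
  case False
  then show ?thesis by simp
qed

lemma fv_eq: "fv v l s = (\<Sum>j\<in>UNIV. c l j s * (p v j s - p v l s))"
proof -
  have "fv v l s = (lam l (x s) / real CARD('n)) * (\<Sum>j\<in>UNIV. (M l j s * phi l j (x s $ l) (x s $ j)) * (p v j s - p v l s))"
    unfolding fv_def X_def rhs_def p_def by (simp add: inner_sum_left inner_diff_left)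
  also have "\<dots> = (\<Sum>j\<in>UNIV. c l j s * (p v j s - p v l s))"
    unfolding sum_distrib_left c_def by (rule sum.cong) (simp_all add: divide_inverse mult_ac)
  finally show ?thesis .
qed

lemma H_cont: "0 \<le> b \<Longrightarrow> continuous_on {0..b} (H l j)"
proof -
  assume b: "0 \<le> b"
  have xc: "continuous_on {0..b} x" by (rule xcont[OF b])
  obtain L1 where "L1-lipschitz_on UNIV (lam l)" using lam_lip by blast
  then have lc: "continuous_on UNIV (lam l)" by (rule lipschitz_on_continuous_on)
  obtain L2 where "L2-lipschitz_on UNIV (\<lambda>p. phi l j (fst p) (snd p))" using phi_lip by blast
  then have pc: "continuous_on UNIV (\<lambda>p. phi l j (fst p) (snd p))" by (rule lipschitz_on_continuous_on)
  have c1: "continuous_on {0..b} (\<lambda>s. lam l (x s))"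
    by (rule continuous_on_compose2[OF lc xc]) auto
  have pair: "continuous_on {0..b} (\<lambda>s. (x s $ l, x s $ j))"
    by (intro continuous_on_Pair continuous_on_component xc)
  have c2: "continuous_on {0..b} (\<lambda>s. (\<lambda>p. phi l j (fst p) (snd p)) (x s $ l, x s $ j))"
    by (rule continuous_on_compose2[OF pc pair]) auto
  show ?thesis unfolding H_def using continuous_on_mult[OF c1 c2] by simp
qed

lemma c_eq: "c l j s = H l j s * (M l j s / real CARD('n))"
  unfolding c_def H_def by simp

lemma H_pos: "H l j s > 0"
  unfolding H_def using lam_pos phi_pos by simp

lemma H_nn: "H l j s \<ge> 0"
  using H_pos[of l j s] by simp

lemma Npos: "real CARD('n) \<ge> 1"
  using N2 by simp

lemma c_nonneg: "s \<ge> 0 \<Longrightarrow> c l j s \<ge> 0"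
  unfolding c_eq using H_pos[of l j s] M_range[of s l j] by simp

lemma c_le_H: "s \<ge> 0 \<Longrightarrow> c l j s \<le> H l j s"
proof -
  assume s: "s \<ge> 0"
  have m1: "M l j s \<le> 1" using M_range[OF s, of l j] by blast
  then have "M l j s \<le> real CARD('n)" using Npos by linarith
  then have "M l j s / real CARD('n) \<le> 1" using Npos by (simp add: divide_le_eq)
  from mult_left_le[OF this H_nn[of l j s]] show ?thesis unfolding c_eq .
qed

lemma c_bound: "0 \<le> b \<Longrightarrow> \<exists>C. \<forall>l j s. s \<in> {0..b} \<longrightarrow> c l j s \<le> C"
proof -
  assume b: "0 \<le> b"
  define h where "h = (\<lambda>s. \<Sum>l\<in>UNIV. \<Sum>j\<in>UNIV. H l j s)"
  have "continuous_on {0..b} h" unfolding h_def by (intro continuous_on_sum H_cont b)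
  then have "compact (h ` {0..b})" by (rule compact_continuous_image) simp
  then have "bounded (h ` {0..b})" by (rule compact_imp_bounded)
  then obtain B where B: "\<And>s. s \<in> {0..b} \<Longrightarrow> \<bar>h s\<bar> \<le> B" unfolding bounded_real by blast
  have "c l j s \<le> B" if s: "s \<in> {0..b}" for l j s
  proof -
    have "H l j s \<le> (\<Sum>j\<in>UNIV. H l j s)" by (rule member_le_sum) (auto intro: H_nn)
    also have "\<dots> \<le> h s" unfolding h_def
      by (rule member_le_sum[where f = "\<lambda>l. \<Sum>j\<in>UNIV. H l j s"]) (auto intro!: sum_nonneg H_nn)
    also have "\<dots> \<le> B" using B[OF s] by simp
    finally show ?thesis using c_le_H[of s l j] s by simp
  qed
  then show ?thesis by blast
qed

lemma inv_conc:
  assumes a: "0 \<le> a" and ab: "a \<le> b" and P0: "\<And>l. p v l a \<le> P0"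
  shows "p v l b \<le> P0"
proof -
  obtain C where C: "\<And>l j s. s \<in> {0..b} \<Longrightarrow> c l j s \<le> C" using c_bound[of b] a ab by auto
  have "P0 - p v l b \<ge> 0"
  proof (rule inv_system[where g = "\<lambda>l s. P0 - p v l s" and f = "\<lambda>l s. - fv v l s" and c = c and C = C, OF ab])
    show "continuous_on {a..b} (\<lambda>s. P0 - p v l s)" for l by (intro continuous_intros pcont a)
    show "(\<lambda>s. - fv v l s) integrable_on {a..b}" for l
      by (rule integrable_neg, rule integrable_on_subinterval[OF fvint[of b]]) (use a ab in auto)
    show "P0 - p v l t - (P0 - p v l t') = integral {t'..t} (\<lambda>s. - fv v l s)" if "a \<le> t'" "t' \<le> t" "t \<le> b" for l t' t
      using pdiff[of t' t v l] that a by (simp add: integral_neg)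
    show "- fv v l s = (\<Sum>j\<in>UNIV. c l j s * (P0 - p v j s - (P0 - p v l s)))" if "s \<in> {a..b}" for l s
      unfolding fv_eq sum_negf[symmetric] by (rule sum.cong) (simp_all add: algebra_simps)
    show "0 \<le> c l j s \<and> c l j s \<le> C" if "s \<in> {a..b}" for l j s
      using that a c_nonneg[of s l j] C[of s l j] by auto
    show "0 \<le> P0 - p v l a" for l using P0[of l] by simp
  qed
  then show ?thesis by simp
qed

end

context cons_sys begin

definition R where "R = (MAX l. norm (x 0 $ l))"

lemma R_ge: "norm (x 0 $ l) \<le> R"
  unfolding R_def by (rule Max_ge) auto

lemma R_nn: "R \<ge> 0"
  using R_ge[of undefined] norm_ge_zero order_trans by blast

lemma ball: assumes t: "t \<ge> 0" shows "norm (x t $ k) \<le> R"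
proof -
  define v where "v = x t $ k"
  have "p v l 0 \<le> R * norm v" for l
  proof -
    have "p v l 0 \<le> norm (x 0 $ l) * norm v" unfolding p_def by (rule norm_cauchy_schwarz)
    also have "\<dots> \<le> R * norm v" by (rule mult_right_mono[OF R_ge]) simp
    finally show ?thesis .
  qed
  then have "p v k t \<le> R * norm v" by (intro inv_conc[OF _ t]) auto
  then have "norm v * norm v \<le> R * norm v" unfolding p_def v_def
    by (simp add: power2_norm_eq_inner[symmetric] power2_eq_square)
  then show ?thesis
  proof (cases "norm v = 0")
    case True then show ?thesis using R_nn v_def by simp
  next
    case False
    then have "norm v > 0" by simp
    then show ?thesis using \<open>norm v * norm v \<le> R * norm v\<close> mult_right_le_imp_le v_def by blast
  qed
qed

definition Sset where "Sset = {lam i y * phi i j (y$i) (y$j) | i j y. \<forall>k. norm (y$k) \<le> R}"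
definition Kb where "Kb = {y::(real^'d)^'n. \<forall>k. norm (y$k) \<le> R}"

lemma mlow_eq: "m_low lam phi (x 0) = Inf Sset"
  unfolding m_low_def Sset_def R_def ..

lemma mup_eq: "m_up lam phi (x 0) = Sup Sset"
  unfolding m_up_def Sset_def R_def ..

lemma inS: "(\<And>k. norm (y$k) \<le> R) \<Longrightarrow> lam i y * phi i j (y$i) (y$j) \<in> Sset"
  unfolding Sset_def by blast

lemma S_pos: "z \<in> Sset \<Longrightarrow> z > 0"
  unfolding Sset_def using lam_pos phi_pos by auto

lemma S_ne: "Sset \<noteq> {}"
  using inS[of "x 0", OF R_ge] by blast

lemma bddS: "bdd_below Sset"
  by (rule bdd_belowI[of _ 0]) (auto dest: S_pos)

lemma Kb_compact: "compact Kb"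
proof -
  have "closed Kb" unfolding Kb_def
    by (intro closed_Collect_all closed_Collect_le continuous_intros continuous_on_component continuous_on_id)
  moreover have "bounded Kb" unfolding bounded_iff
  proof (intro exI ballI)
    fix y assume "y \<in> Kb"
    then have yk: "norm (y $ k) \<le> R" for k unfolding Kb_def by auto
    have "norm y \<le> (\<Sum>k\<in>UNIV. norm (y $ k))" unfolding norm_vec_def by (rule L2_set_le_sum) simp
    also have "\<dots> \<le> (\<Sum>k\<in>(UNIV::'n set). R)" by (rule sum_mono) (rule yk)
    finally show "norm y \<le> real CARD('n) * R" by simp
  qed
  ultimately show ?thesis by (simp add: compact_eq_bounded_closed)
qed

lemma fcont: "continuous_on UNIV (\<lambda>y::(real^'d)^'n. lam i y * phi i j (y$i) (y$j))"
proof -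
  obtain L1 where "L1-lipschitz_on UNIV (lam i)" using lam_lip by blast
  then have lc: "continuous_on UNIV (lam i)" by (rule lipschitz_on_continuous_on)
  obtain L2 where "L2-lipschitz_on UNIV (\<lambda>p. phi i j (fst p) (snd p))" using phi_lip by blast
  then have pc: "continuous_on UNIV (\<lambda>p. phi i j (fst p) (snd p))" by (rule lipschitz_on_continuous_on)
  have pair: "continuous_on UNIV (\<lambda>y::(real^'d)^'n. (y $ i, y $ j))"
    by (intro continuous_on_Pair continuous_on_component continuous_on_id)
  have c2: "continuous_on UNIV (\<lambda>y::(real^'d)^'n. (\<lambda>p. phi i j (fst p) (snd p)) (y $ i, y $ j))"
    by (rule continuous_on_compose2[OF pc pair]) auto
  show ?thesis using continuous_on_mult[OF lc c2] by simp
qed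

lemma bddA: "bdd_above Sset"
proof -
  have eq: "Sset = (\<Union>i\<in>UNIV. \<Union>j\<in>UNIV. (\<lambda>y. lam i y * phi i j (y$i) (y$j)) ` Kb)"
    unfolding Sset_def Kb_def by blast
  have "bounded ((\<lambda>y. lam i y * phi i j (y$i) (y$j)) ` Kb)" for i j
    by (intro compact_imp_bounded compact_continuous_image Kb_compact continuous_on_subset[OF fcont]) auto
  then have "bounded (\<Union>i\<in>UNIV. \<Union>j\<in>UNIV. (\<lambda>y. lam i y * phi i j (y$i) (y$j)) ` Kb)"
    by (intro bounded_UN) auto
  then show ?thesis unfolding eq by (rule bounded_imp_bdd_above)
qed

lemma mlow_nn: "m_low lam phi (x 0) \<ge> 0"
  unfolding mlow_eq by (rule cInf_greatest[OF S_ne]) (auto dest: S_pos)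

lemma mup_nn: "m_up lam phi (x 0) \<ge> 0"
proof -
  obtain z where "z \<in> Sset" using S_ne by blast
  then have "z \<le> Sup Sset" "z > 0" using cSup_upper[OF _ bddA] S_pos by auto
  then show ?thesis unfolding mup_eq by simp
qed

lemma H_bounds: assumes s: "s \<ge> 0"
  shows "m_low lam phi (x 0) \<le> H l j s" "H l j s \<le> m_up lam phi (x 0)"
proof -
  have "H l j s \<in> Sset" unfolding H_def by (rule inS) (rule ball[OF s])
  then show "m_low lam phi (x 0) \<le> H l j s" "H l j s \<le> m_up lam phi (x 0)"
    unfolding mlow_eq mup_eq by (auto intro: cInf_lower[OF _ bddS] cSup_upper[OF _ bddA])
qed

lemma c_up: assumes s: "s \<ge> 0" shows "c l j s \<le> m_up lam phi (x 0) / real CARD('n)"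
proof -
  have m: "0 \<le> M l j s" "M l j s \<le> 1" using M_range[OF s] by auto
  have "c l j s = H l j s * M l j s / real CARD('n)" unfolding c_eq by simp
  also have "\<dots> \<le> m_up lam phi (x 0) * 1 / real CARD('n)"
    using H_bounds(2)[OF s] H_nn m Npos mup_nn by (intro divide_right_mono mult_mono) auto
  finally show ?thesis by simp
qed

lemma c_low: assumes s: "s \<ge> 0" shows "c l j s \<ge> (m_low lam phi (x 0) / real CARD('n)) * M l j s"
proof -
  have m: "0 \<le> M l j s" using M_range[OF s] by auto
  have "(m_low lam phi (x 0) / real CARD('n)) * M l j s = m_low lam phi (x 0) * M l j s / real CARD('n)" by simp
  also have "\<dots> \<le> H l j s * M l j s / real CARD('n)"
    using H_bounds(1)[OF s] m Npos by (intro divide_right_mono mult_right_mono) auto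
  also have "\<dots> = c l j s" unfolding c_eq by simp
  finally show ?thesis .
qed

lemma Mint: assumes a: "0 \<le> a" shows "M i k integrable_on {a..b}"
proof -
  have "M i k \<in> borel_measurable (lebesgue_on {a..b})"
    by (rule measurable_restrict_mono[OF M_meas]) (use a in auto)
  moreover have "(\<lambda>_. 1::real) integrable_on {a..b}" by (intro integrable_continuous_interval continuous_intros)
  moreover have "norm (M i k s) \<le> 1" if "s \<in> {a..b}" for s using M_range[of s i k] that a by auto
  ultimately have "M i k absolutely_integrable_on {a..b}"
    by (intro measurable_bounded_by_integrable_imp_absolutely_integrable) auto
  then show ?thesis by (rule set_lebesgue_integral_eq_integral(1))
qed

end

context cons_sys begin

definition rr where "rr = real (CARD('n) - 1) * (m_up lam phi (x 0) / real CARD('n))"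
definition qq where "qq = m_low lam phi (x 0) * \<mu> * T / real CARD('n)"
definition cc where "cc = exp (- 2 * rr * T) * min 1 qq"

lemma rr_nn: "rr \<ge> 0" unfolding rr_def using mup_nn by simp
lemma qq_nn: "qq \<ge> 0" unfolding qq_def using mlow_nn mu_pos T_pos by simp
lemma cc_nn: "cc \<ge> 0" unfolding cc_def using qq_nn by simp
lemma cc_le: "cc \<le> exp (- rr * T)"
proof -
  have "exp (- 2 * rr * T) \<le> exp (- rr * T)" using rr_nn T_pos by (simp add: mult_nonneg_nonneg)
  moreover have "min 1 qq \<le> 1" by simp
  ultimately have "exp (- 2 * rr * T) * min 1 qq \<le> exp (- rr * T) * 1"
    using qq_nn by (intro mult_mono) auto
  then show ?thesis unfolding cc_def by simp
qed
lemma cc_le1: "cc \<le> 1"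
proof -
  have "- rr * T \<le> 0" using rr_nn T_pos by simp
  then have "exp (- rr * T) \<le> 1" by simp
  then show ?thesis using cc_le by linarith
qed

lemma alg1: "(E::real) * ((m / N) * (E * d) * (u * T)) = E * E * (m * u * T / N) * d"
  by (simp add: divide_inverse mult_ac)

lemma gap:
  assumes a: "0 \<le> a" and P0: "\<And>l. p v l a \<le> P0" and Ik: "integral {a..a+T} (M i k) \<ge> \<mu> * T"
  shows "P0 - p v i (a+T) \<ge> cc * (P0 - p v k a)"
proof -
  define b where "b = a + T"
  have ab: "a \<le> b" unfolding b_def using T_pos by simp
  define \<rho> where "\<rho> = m_up lam phi (x 0) / real CARD('n)"
  have gc: "\<And>l. continuous_on {a..b} (\<lambda>s. P0 - p v l s)" by (intro continuous_intros pcont a)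
  have fi: "\<And>l. (\<lambda>s. - fv v l s) integrable_on {a..b}"
    by (rule integrable_neg, rule integrable_on_subinterval[OF fvint[of b]]) (use a ab in auto)
  have rep: "P0 - p v l t - (P0 - p v l t') = integral {t'..t} (\<lambda>s. - fv v l s)"
    if "a \<le> t'" "t' \<le> t" "t \<le> b" for l t' t
    using pdiff[of t' t v l] that a by (simp add: integral_neg)
  have fe: "\<And>l s. s \<in> {a..b} \<Longrightarrow> - fv v l s = (\<Sum>j\<in>UNIV. c l j s * (P0 - p v j s - (P0 - p v l s)))"
    unfolding fv_eq sum_negf[symmetric] by (rule sum.cong) (simp_all add: algebra_simps)
  have cb: "\<And>l j s. s \<in> {a..b} \<Longrightarrow> 0 \<le> c l j s \<and> c l j s \<le> \<rho>"
    unfolding \<rho>_def using a by (auto intro!: c_nonneg c_up)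
  have gnn: "\<And>l s. s \<in> {a..b} \<Longrightarrow> P0 - p v l s \<ge> 0"
    using inv_conc[OF a _ P0] by auto
  have gka: "P0 - p v k a \<ge> 0" using P0[of k] by simp
  have E: "exp (- (real (CARD('n) - 1) * \<rho>) * (b - a)) = exp (- rr * T)"
    unfolding rr_def \<rho>_def b_def by simp
  show ?thesis
  proof (cases "i = k")
    case True
    have "P0 - p v k b \<ge> exp (- (real (CARD('n) - 1) * \<rho>) * (b - a)) * (P0 - p v k a)"
      by (rule decay_system[where g = "\<lambda>l s. P0 - p v l s", OF ab gc fi rep fe cb gnn]) (use ab in auto)
    then have "P0 - p v k b \<ge> exp (- rr * T) * (P0 - p v k a)" unfolding E .
    moreover have "cc * (P0 - p v k a) \<le> exp (- rr * T) * (P0 - p v k a)"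
      using cc_le gka by (rule mult_right_mono)
    ultimately show ?thesis using True unfolding b_def by simp
  next
    case False
    define \<beta> where "\<beta> = m_low lam phi (x 0) / real CARD('n)"
    have beta: "\<beta> \<ge> 0" unfolding \<beta>_def using mlow_nn by simp
    have "P0 - p v i b \<ge> exp (- (real (CARD('n) - 1) * \<rho>) * (b - a)) *
           (\<beta> * (exp (- (real (CARD('n) - 1) * \<rho>) * (b - a)) * (P0 - p v k a)) * integral {a..b} (M i k))"
    proof (rule push_system[where g = "\<lambda>l s. P0 - p v l s", OF ab gc fi rep fe cb gnn False])
      show "M i k integrable_on {a..b}" by (rule Mint[OF a])
      show "\<And>s. s \<in> {a..b} \<Longrightarrow> 0 \<le> M i k s" using M_range a by auto
      show "0 \<le> \<beta>" by (rule beta)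
      show "\<And>s. s \<in> {a..b} \<Longrightarrow> \<beta> * M i k s \<le> c i k s" unfolding \<beta>_def using a c_low by auto
    qed
    then have 1: "P0 - p v i b \<ge> exp (- rr * T) * (\<beta> * (exp (- rr * T) * (P0 - p v k a)) * integral {a..b} (M i k))"
      unfolding E .
    have "exp (- rr * T) * (\<beta> * (exp (- rr * T) * (P0 - p v k a)) * (\<mu> * T))
        \<le> exp (- rr * T) * (\<beta> * (exp (- rr * T) * (P0 - p v k a)) * integral {a..b} (M i k))"
      using Ik beta gka unfolding b_def by (intro mult_left_mono) (auto intro!: mult_nonneg_nonneg)
    moreover have "exp (- rr * T) * (\<beta> * (exp (- rr * T) * (P0 - p v k a)) * (\<mu> * T))
        = exp (- 2 * rr * T) * qq * (P0 - p v k a)"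
    proof -
      have e2: "exp (- 2 * rr * T) = exp (- rr * T) * exp (- rr * T)"
        by (simp add: exp_add[symmetric])
      show ?thesis unfolding qq_def \<beta>_def e2 by (rule alg1)
    qed
    moreover have "cc * (P0 - p v k a) \<le> exp (- 2 * rr * T) * qq * (P0 - p v k a)"
      unfolding cc_def using gka by (intro mult_right_mono mult_left_mono) auto
    ultimately show ?thesis using 1 unfolding b_def by linarith
  qed
qed

lemma diam_ge: "norm (y $ i - y $ j) \<le> conf_diam y"
proof -
  have "norm (y $ i - y $ j) \<le> (MAX j. norm (y $ i - y $ j))" by (rule Max_ge) auto
  also have "\<dots> \<le> conf_diam y" unfolding conf_diam_def by (rule Max_ge) auto
  finally show ?thesis .
qed

lemma diam_le: "(\<And>i j. norm (y $ i - y $ j) \<le> B) \<Longrightarrow> conf_diam y \<le> B"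
  unfolding conf_diam_def by (intro Max.boundedI) auto

lemma spread:
  assumes t0: "0 \<le> t0"
  obtains P0 m0 where "\<And>l. p v l t0 \<le> P0" "\<And>l. m0 \<le> p v l t0"
    "P0 - m0 \<le> conf_diam (x t0) * norm v"
proof -
  define P0 where "P0 = Max (range (\<lambda>l. p v l t0))"
  define m0 where "m0 = Min (range (\<lambda>l. p v l t0))"
  have "P0 \<in> range (\<lambda>l. p v l t0)" unfolding P0_def by (rule Max_in) auto
  then obtain A where A: "P0 = p v A t0" by auto
  have "m0 \<in> range (\<lambda>l. p v l t0)" unfolding m0_def by (rule Min_in) auto
  then obtain B where B: "m0 = p v B t0" by auto
  have 1: "p v l t0 \<le> P0" for l unfolding P0_def by (rule Max_ge) auto
  have 2: "m0 \<le> p v l t0" for l unfolding m0_def by (rule Min_le) auto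
  have "P0 - m0 = inner (x t0 $ A - x t0 $ B) v" unfolding A B p_def by (simp add: inner_diff_left)
  also have "\<dots> \<le> norm (x t0 $ A - x t0 $ B) * norm v" by (rule norm_cauchy_schwarz)
  also have "\<dots> \<le> conf_diam (x t0) * norm v" by (rule mult_right_mono[OF diam_ge]) simp
  finally show ?thesis using that 1 2 by blast
qed

lemma p_neg: "p (- v) l s = - p v l s" unfolding p_def by simp

lemma sq_bound:
  assumes "norm v * norm v \<le> D * norm v" "D \<ge> 0"
  shows "norm v \<le> D"
proof (cases "norm v = 0")
  case True then show ?thesis using assms by simp
next
  case False
  then have "norm v > 0" by simp
  then show ?thesis using assms(1) mult_right_le_imp_le by blast
qed

lemma diam_nn: "conf_diam y \<ge> 0"
  using diam_ge[of y undefined undefined] norm_ge_zero order_trans by blast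

lemma diam_mono:
  assumes t0: "0 \<le> t0" and tt: "t0 \<le> t"
  shows "conf_diam (x t) \<le> conf_diam (x t0)"
proof (rule diam_le)
  fix i j
  define v where "v = x t $ i - x t $ j"
  obtain P0 m0 where P0: "\<And>l. p v l t0 \<le> P0" and m0: "\<And>l. m0 \<le> p v l t0"
    and D: "P0 - m0 \<le> conf_diam (x t0) * norm v" using spread[OF t0] by blast
  have "p v i t \<le> P0" by (rule inv_conc[OF t0 tt P0])
  moreover have "p (- v) j t \<le> - m0" by (rule inv_conc[OF t0 tt]) (use m0 p_neg in auto)
  moreover have "norm v * norm v = p v i t - p v j t"
  proof -
    have "norm v * norm v = inner v v" by (simp add: dot_square_norm power2_eq_square)
    also have "\<dots> = p v i t - p v j t" by (simp add: p_def v_def inner_diff_left)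
    finally show ?thesis .
  qed
  ultimately have "norm v * norm v \<le> conf_diam (x t0) * norm v" using D p_neg by simp
  then show "norm (x t $ i - x t $ j) \<le> conf_diam (x t0)" unfolding v_def[symmetric]
    by (rule sq_bound) (rule diam_nn)
qed

lemma contract:
  assumes t0: "0 \<le> t0"
  shows "conf_diam (x (t0 + T)) \<le> (1 - cc) * conf_diam (x t0)"
proof (rule diam_le)
  fix i j
  define t1 where "t1 = t0 + T"
  define v where "v = x t1 $ i - x t1 $ j"
  obtain k where k: "(1/T) * integral {t0..t0+T} (M i k) \<ge> \<mu>" "(1/T) * integral {t0..t0+T} (M j k) \<ge> \<mu>"
    using isc t0 unfolding ISC_def by blast
  have Ii: "integral {t0..t0+T} (M i k) \<ge> \<mu> * T" using k(1) T_pos by (simp add: field_simps)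
  have Ij: "integral {t0..t0+T} (M j k) \<ge> \<mu> * T" using k(2) T_pos by (simp add: field_simps)
  obtain P0 m0 where P0: "\<And>l. p v l t0 \<le> P0" and m0: "\<And>l. m0 \<le> p v l t0"
    and D: "P0 - m0 \<le> conf_diam (x t0) * norm v" using spread[OF t0] by blast
  have g1: "P0 - p v i t1 \<ge> cc * (P0 - p v k t0)" unfolding t1_def by (rule gap[OF t0 P0 Ii])
  have m0': "p (- v) l t0 \<le> - m0" for l using m0[of l] p_neg by simp
  have g2: "- m0 - p (- v) j t1 \<ge> cc * (- m0 - p (- v) k t0)" unfolding t1_def by (rule gap[OF t0 m0' Ij])
  have "cc * (P0 - p v k t0) + cc * (- m0 - p (- v) k t0) = cc * (P0 - m0)"
    by (simp add: p_neg algebra_simps)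
  then have "p v i t1 - p v j t1 \<le> (1 - cc) * (P0 - m0)" using g1 g2 p_neg by (simp add: algebra_simps)
  also have "\<dots> \<le> (1 - cc) * (conf_diam (x t0) * norm v)" using D cc_le1 by (intro mult_left_mono) auto
  moreover have "norm v * norm v = p v i t1 - p v j t1"
  proof -
    have "norm v * norm v = inner v v" by (simp add: dot_square_norm power2_eq_square)
    also have "\<dots> = p v i t1 - p v j t1" by (simp add: p_def v_def inner_diff_left)
    finally show ?thesis .
  qed
  ultimately have sq: "norm v * norm v \<le> ((1 - cc) * conf_diam (x t0)) * norm v"
    by (simp add: mult.assoc)
  have D0: "(1 - cc) * conf_diam (x t0) \<ge> 0" using cc_le1 diam_nn by (intro mult_nonneg_nonneg) auto
  have "norm v \<le> (1 - cc) * conf_diam (x t0)" by (rule sq_bound[OF sq D0])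
  then show "norm (x (t0 + T) $ i - x (t0 + T) $ j) \<le> (1 - cc) * conf_diam (x t0)"
    unfolding v_def t1_def .
qed

end

context cons_sys begin

lemma const_bound:
  "1 - cc \<le> 1 - (m_low lam phi (x 0) * \<mu> * T / (real CARD('n) + m_low lam phi (x 0) * \<mu> * T))
              ^ (CARD('n) - 1)
            * exp (- 2 * (real (CARD('n) - 1) / real CARD('n))
                   * real (CARD('n) - 1) ^ (2 ^ (CARD('n) * (CARD('n) - 1)))
                   * T * m_up lam phi (x 0))"
proof -
  define m where "m = m_low lam phi (x 0)"
  define mu where "mu = m_up lam phi (x 0)"
  define N where "N = real CARD('n)"
  define A where "A = m * \<mu> * T / (N + m * \<mu> * T)"
  define Kk where "Kk = real (CARD('n) - 1) ^ (2 ^ (CARD('n) * (CARD('n) - 1)))"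
  have N1: "N \<ge> 1" unfolding N_def using Npos .
  have mmt: "m * \<mu> * T \<ge> 0" unfolding m_def using mlow_nn mu_pos T_pos by simp
  have mu0: "mu \<ge> 0" unfolding mu_def using mup_nn .
  have A0: "A \<ge> 0" unfolding A_def using mmt N1 by simp
  have A1: "A \<le> 1" unfolding A_def using mmt N1 by (simp add: divide_le_eq)
  have Aq: "A \<le> qq"
  proof -
    have "m * \<mu> * T / (N + m * \<mu> * T) \<le> m * \<mu> * T / N"
      by (rule divide_left_mono) (use mmt N1 in auto)
    then show ?thesis unfolding A_def qq_def m_def N_def .
  qed
  have "A ^ (CARD('n) - 1) \<le> A ^ 1"
    by (rule power_decreasing) (use N2 A0 A1 in auto)
  then have Apow: "A ^ (CARD('n) - 1) \<le> min 1 qq" using A1 Aq by simp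
  have Apow0: "A ^ (CARD('n) - 1) \<ge> 0" using A0 by simp
  have K1: "Kk \<ge> 1" unfolding Kk_def by (rule one_le_power) (use N2 in simp)
  define w where "w = (real (CARD('n) - 1) / N) * T * mu"
  have w0: "w \<ge> 0" unfolding w_def using mu0 T_pos N1 by simp
  have rrT: "rr * T = w" unfolding rr_def w_def mu_def N_def by (simp add: divide_inverse mult_ac)
  have ex: "- 2 * (real (CARD('n) - 1) / N) * Kk * T * mu = - 2 * (w * Kk)"
    unfolding w_def by (simp add: mult_ac)
  have "w * 1 \<le> w * Kk" using K1 w0 by (rule mult_left_mono)
  then have "- 2 * (w * Kk) \<le> - 2 * rr * T" using rrT by simp
  then have E: "exp (- 2 * (real (CARD('n) - 1) / N) * Kk * T * mu) \<le> exp (- 2 * rr * T)"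
    unfolding ex by simp
  have "A ^ (CARD('n) - 1) * exp (- 2 * (real (CARD('n) - 1) / N) * Kk * T * mu) \<le> min 1 qq * exp (- 2 * rr * T)"
    by (rule mult_mono[OF Apow E]) (use qq_nn in auto)
  also have "\<dots> = cc" unfolding cc_def by simp
  finally show ?thesis unfolding A_def Kk_def m_def mu_def N_def by simp
qed

lemma main:
  "\<forall>n::nat.
     conf_diam (x (real n * real (CARD('n) - 1) * 2 ^ (CARD('n) * (CARD('n) - 1)) * T))
     \<le> (1 - (m_low lam phi (x 0) * \<mu> * T / (real CARD('n) + m_low lam phi (x 0) * \<mu> * T))
              ^ (CARD('n) - 1)
            * exp (- 2 * (real (CARD('n) - 1) / real CARD('n))
                   * real (CARD('n) - 1) ^ (2 ^ (CARD('n) * (CARD('n) - 1)))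
                   * T * m_up lam phi (x 0))) ^ n
       * conf_diam (x 0)"
proof -
  define C0 where "C0 = (1 - (m_low lam phi (x 0) * \<mu> * T / (real CARD('n) + m_low lam phi (x 0) * \<mu> * T))
              ^ (CARD('n) - 1)
            * exp (- 2 * (real (CARD('n) - 1) / real CARD('n))
                   * real (CARD('n) - 1) ^ (2 ^ (CARD('n) * (CARD('n) - 1)))
                   * T * m_up lam phi (x 0)))"
  have C0c: "1 - cc \<le> C0" unfolding C0_def by (rule const_bound)
  have C0n: "C0 \<ge> 0" using C0c cc_le1 by linarith
  define \<tau> where "\<tau> = real (CARD('n) - 1) * 2 ^ (CARD('n) * (CARD('n) - 1)) * T"
  have tau: "T \<le> \<tau>"
  proof -
    have "1 \<le> real (CARD('n) - 1)" using N2 by simp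
    moreover have "(1::real) \<le> 2 ^ (CARD('n) * (CARD('n) - 1))" by (rule one_le_power) simp
    ultimately have "1 * 1 \<le> real (CARD('n) - 1) * (2::real) ^ (CARD('n) * (CARD('n) - 1))"
      by (intro mult_mono) auto
    then have "1 * T \<le> (real (CARD('n) - 1) * 2 ^ (CARD('n) * (CARD('n) - 1))) * T"
      using T_pos by (intro mult_right_mono) auto
    then show ?thesis unfolding \<tau>_def by simp
  qed
  have tn: "real n * real (CARD('n) - 1) * 2 ^ (CARD('n) * (CARD('n) - 1)) * T = real n * \<tau>" for n
    unfolding \<tau>_def by (simp add: mult_ac)
  have "conf_diam (x (real n * \<tau>)) \<le> C0 ^ n * conf_diam (x 0)" for n
  proof (induction n)
    case 0
    then show ?case by simp
  next
    case (Suc n)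
    define t where "t = real n * \<tau>"
    have t0: "t \<ge> 0" unfolding t_def using tau T_pos by simp
    have ts: "real (Suc n) * \<tau> = t + \<tau>" unfolding t_def by (simp add: algebra_simps)
    have "conf_diam (x (t + \<tau>)) \<le> conf_diam (x (t + T))"
      by (rule diam_mono) (use t0 T_pos tau in auto)
    also have "\<dots> \<le> (1 - cc) * conf_diam (x t)" by (rule contract[OF t0])
    also have "\<dots> \<le> C0 * conf_diam (x t)" by (rule mult_right_mono[OF C0c diam_nn])
    also have "\<dots> \<le> C0 * (C0 ^ n * conf_diam (x 0))"
      using Suc.IH C0n unfolding t_def by (rule mult_left_mono)
    finally show ?case unfolding ts by simp
  qed
  then show ?thesis unfolding tn C0_def by blast
qed

end

theorem corollary3:
  fixes lam :: "'n::finite \<Rightarrow> (real^'d)^'n \<Rightarrow> real"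
    and phi :: "'n \<Rightarrow> 'n \<Rightarrow> real^'d \<Rightarrow> real^'d \<Rightarrow> real"
    and M :: "'n \<Rightarrow> 'n \<Rightarrow> real \<Rightarrow> real"
    and x :: "real \<Rightarrow> (real^'d)^'n"
    and T \<mu> :: real
  assumes N2: "CARD('n) \<ge> 2"
    and M_meas: "\<And>i j. M i j \<in> borel_measurable (restrict_space lebesgue {0..})"
    and M_range: "\<And>i j t. t \<ge> 0 \<Longrightarrow> 0 \<le> M i j t \<and> M i j t \<le> 1"
    and lam_lip: "\<And>i. \<exists>L. L-lipschitz_on UNIV (lam i)"
    and phi_lip: "\<And>i j. \<exists>L. L-lipschitz_on UNIV (\<lambda>p. phi i j (fst p) (snd p))"
    and lam_pos: "\<And>i y. lam i y > 0"
    and phi_pos: "\<And>i j a b. phi i j a b > 0"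
    and sol: "caratheodory_solution (rhs lam M phi) x"
    and T_pos: "T > 0" and mu_pos: "\<mu> > 0"
    and isc: "ISC M T \<mu>"
  shows "\<forall>n::nat.
     conf_diam (x (real n * real (CARD('n) - 1) * 2 ^ (CARD('n) * (CARD('n) - 1)) * T))
     \<le> (1 - (m_low lam phi (x 0) * \<mu> * T / (real CARD('n) + m_low lam phi (x 0) * \<mu> * T))
              ^ (CARD('n) - 1)
            * exp (- 2 * (real (CARD('n) - 1) / real CARD('n))
                   * real (CARD('n) - 1) ^ (2 ^ (CARD('n) * (CARD('n) - 1)))
                   * T * m_up lam phi (x 0))) ^ n
       * conf_diam (x 0)"
proof -
  interpret cons_sys lam phi M x T \<mu>
    by (rule cons_sys.intro[OF N2 M_meas M_range lam_lip phi_lip lam_pos phi_pos sol T_pos mu_pos isc])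
  show ?thesis by (rule main)
qed

end
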